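(* Let $\alpha \in \mathbb{R}_{>0}$ and $M_\alpha = \{f(\alpha) \mid f(x) \in \mathbb{N}_0[x,x^{-1}]\}$ as an additive monoid. The following are equivalent: (a) $M_\alpha$ is a UFM; (b) $M_\alpha$ is an HFM; (c) $\alpha = 1$ or $\alpha$ is transcendental.
   Context: $\mathbb{N}_0[x,x^{-1}]$ denotes the semiring of Laurent polynomials with coefficients in $\mathbb{N}_0$. For an atomic reduced additive monoid $M$ and nonzero $x\in M$, $\mathsf{Z}(x)$ denotes the set of factorizations of $x$ (formal sums of atoms, up to order, adding to $x$) and $\mathsf{L}(x)$ the set of their lengths. $M$ is a UFM (unique factorization monoid) if it is atomic and $|\mathsf{Z}(x)| = 1$ for all nonzero $x$, and an HFM (half-factorial monoid) if it is atomic and $|\mathsf{L}(x)| = 1$ for all nonzero $x$. *)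

theory Defs
  imports "HOL-Computational_Algebra.Polynomial" "HOL-Library.Multiset"
begin

text \<open>A Laurent polynomial with coefficients in N_0 is given by a finite set S of exponents
  and coefficients c :: int => nat.\<close>
definition laurent_monoid :: "real \<Rightarrow> real set" where
  "laurent_monoid \<alpha> =
     {x. \<exists>(S::int set) (c::int \<Rightarrow> nat). finite S \<and> x = (\<Sum>i\<in>S. real (c i) * \<alpha> powi i)}"

definition atoms :: "real set \<Rightarrow> real set" where
  "atoms M = {a \<in> M. a \<noteq> 0 \<and>
      \<not> (\<exists>b c. b \<in> M \<and> c \<in> M \<and> b \<noteq> 0 \<and> c \<noteq> 0 \<and> a = b + c)}"

definition factorizations :: "real set \<Rightarrow> real \<Rightarrow> real multiset set" where
  "factorizations M x = {F. set_mset F \<subseteq> atoms M \<and> sum_mset F = x}"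

definition lengths :: "real set \<Rightarrow> real \<Rightarrow> nat set" where
  "lengths M x = size ` factorizations M x"

definition atomic_monoid :: "real set \<Rightarrow> bool" where
  "atomic_monoid M \<longleftrightarrow> (\<forall>x\<in>M. x \<noteq> 0 \<longrightarrow> factorizations M x \<noteq> {})"

definition UFM :: "real set \<Rightarrow> bool" where
  "UFM M \<longleftrightarrow> atomic_monoid M \<and> (\<forall>x\<in>M. x \<noteq> 0 \<longrightarrow> card (factorizations M x) = 1)"

definition HFM :: "real set \<Rightarrow> bool" where
  "HFM M \<longleftrightarrow> atomic_monoid M \<and> (\<forall>x\<in>M. x \<noteq> 0 \<longrightarrow> card (lengths M x) = 1)"

end

theory Submission
  imports Defs
begin


definition lval :: "real \<Rightarrow> int multiset \<Rightarrow> real" where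
  "lval a E = sum_mset (image_mset (\<lambda>i. a powi i) E)"

lemma lval_empty [simp]: "lval a {#} = 0" by (simp add: lval_def)
lemma lval_add [simp]: "lval a (add_mset i E) = a powi i + lval a E" by (simp add: lval_def)
lemma lval_union [simp]: "lval a (E + F) = lval a E + lval a F" by (simp add: lval_def)

lemma lval_nonneg: "a > 0 \<Longrightarrow> lval a E \<ge> 0"
  by (induction E) (auto intro: add_nonneg_nonneg less_imp_le)

lemma lval_pos: "a > 0 \<Longrightarrow> E \<noteq> {#} \<Longrightarrow> lval a E > 0"
proof (induction E)
  case (add x E) then show ?case using lval_nonneg[of a E] by (simp add: add_pos_nonneg)
qed simp

lemma lval_zero_iff: "a > 0 \<Longrightarrow> lval a E = 0 \<longleftrightarrow> E = {#}"
  using lval_pos[of a E] by (cases "E = {#}") auto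

lemma lval_one: "lval 1 E = real (size E)"
  by (simp add: lval_def image_mset_const_eq)

lemma lval_shift: "a > 0 \<Longrightarrow> a powi d * lval a E = lval a (image_mset (\<lambda>x. x + d) E)"
  by (induction E) (auto simp: distrib_left power_int_add mult.commute)

lemma sumrep:
  assumes "finite S"
  shows "lval a (\<Sum>i\<in>S. replicate_mset (c i) (k i)) = (\<Sum>i\<in>S. real (c i) * a powi (k i))
       \<and> size (\<Sum>i\<in>S. replicate_mset (c i) (k i)) = (\<Sum>i\<in>S. c i)"
  using assms
proof (induction S rule: finite_induct)
  case (insert x F)
  then show ?case by (simp add: lval_def)
qed simp

lemma mset_rep: "E = (\<Sum>i\<in>set_mset E. replicate_mset (count E i) i)"
proof (rule multiset_eqI)
  fix x
  show "count E x = count (\<Sum>i\<in>set_mset E. replicate_mset (count E i) i) x"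
    by (simp add: count_sum count_replicate_mset sum.delta' not_in_iff)
qed

lemma lval_rep: "finite S \<Longrightarrow> set_mset E \<subseteq> S \<Longrightarrow> lval a E = (\<Sum>i\<in>S. real (count E i) * a powi i)"
proof -
  assume S: "finite S" "set_mset E \<subseteq> S"
  have "lval a E = (\<Sum>i\<in>set_mset E. real (count E i) * a powi i)"
    using sumrep[of "set_mset E" a "count E" id] mset_rep[of E] by simp
  also have "\<dots> = (\<Sum>i\<in>S. real (count E i) * a powi i)"
    using S by (intro sum.mono_neutral_left) (auto simp: not_in_iff)
  finally show ?thesis .
qed

lemma laurent_eq: "laurent_monoid a = range (lval a)"
proof safe
  fix x assume "x \<in> laurent_monoid a"
  then obtain S c where "finite S" "x = (\<Sum>i\<in>S. real (c i) * a powi i)"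
    unfolding laurent_monoid_def by blast
  then have "x = lval a (\<Sum>i\<in>S. replicate_mset (c i) i)" using sumrep[of S a c id] by simp
  then show "x \<in> range (lval a)" by blast
next
  fix E show "lval a E \<in> laurent_monoid a"
    unfolding laurent_monoid_def using lval_rep[of "set_mset E" E a] by blast
qed

lemma fact_rep: "set_mset F \<subseteq> range g \<Longrightarrow> \<exists>E. F = image_mset g E"
proof (induction F)
  case (add x F)
  then obtain E where "F = image_mset g E" by auto
  moreover from add obtain i where "x = g i" by auto
  ultimately show ?case by (intro exI[of _ "add_mset i E"]) simp
qed simp



lemma transc_inj:
  assumes a: "a > 0" and tr: "\<not> algebraic a" and eq: "lval a E1 = lval a E2"
  shows "E1 = E2"
proof -
  define S where "S = set_mset E1 \<union> set_mset E2"
  have S: "finite S" by (simp add: S_def)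
  define N where "N = (\<Sum>i\<in>S. nat \<bar>i\<bar>)"
  have N: "i + int N \<ge> 0" if "i \<in> S" for i
  proof -
    have "nat \<bar>i\<bar> \<le> N" unfolding N_def using S that by (intro member_le_sum) auto
    then show ?thesis by linarith
  qed
  define d where "d i = real (count E1 i) - real (count E2 i)" for i
  define P where "P = (\<Sum>i\<in>S. monom (d i) (nat (i + int N)))"
  have pw: "a ^ nat (i + int N) = a ^ N * a powi i" if "i \<in> S" for i
  proof -
    have "a ^ nat (i + int N) = a powi (i + int N)"
      using N[OF that] by (metis power_int_of_nat nat_0_le)
    also have "\<dots> = a powi i * a powi (int N)" using a by (simp add: power_int_add)
    finally show ?thesis by simp
  qed
  have "poly P a = (\<Sum>i\<in>S. d i * a ^ nat (i + int N))"
    by (simp add: P_def poly_sum poly_monom)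
  also have "\<dots> = a ^ N * (\<Sum>i\<in>S. d i * a powi i)"
    by (simp add: pw sum_distrib_left mult_ac cong: sum.cong)
  also have "(\<Sum>i\<in>S. d i * a powi i) = lval a E1 - lval a E2"
    using lval_rep[OF S, of E1 a] lval_rep[OF S, of E2 a]
    by (simp add: S_def d_def left_diff_distrib sum_subtractf)
  finally have root: "poly P a = 0" using eq by simp
  have coeff_int: "coeff P k \<in> \<int>" for k
    by (auto simp: P_def coeff_sum coeff_monom d_def intro!: Ints_sum)
  have "P = 0" using tr root coeff_int unfolding algebraic_def by blast
  have cP: "coeff P (nat (i + int N)) = d i" if "i \<in> S" for i
  proof -
    have "coeff P (nat (i + int N)) = (\<Sum>j\<in>S. if j = i then d j else 0)"
      unfolding P_def coeff_sum coeff_monom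
      using that by (intro sum.cong refl) (use N in \<open>auto simp: eq_nat_nat_iff\<close>)
    then show ?thesis using S that by simp
  qed
  show ?thesis
  proof (rule multiset_eqI)
    fix i show "count E1 i = count E2 i"
    proof (cases "i \<in> S")
      case True then show ?thesis using cP[OF True] \<open>P = 0\<close> by (simp add: d_def)
    next
      case False then show ?thesis by (simp add: S_def not_in_iff)
    qed
  qed
qed

lemma synth_int:
  assumes "\<And>i. coeff p i \<in> \<int>"
  shows "coeff (synthetic_div p (1::real)) i \<in> \<int>"
  using assms
proof (induction p arbitrary: i)
  case 0 then show ?case by simp
next
  case (pCons a p)
  have ip: "coeff p i \<in> \<int>" for i using pCons.prems[of "Suc i"] by simp
  have "poly p 1 \<in> \<int>" using ip by (auto simp: poly_altdef intro!: Ints_sum)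
  then show ?case using pCons.IH[OF ip] by (cases i) auto
qed

lemma good_poly:
  assumes "algebraic a" "a \<noteq> (1::real)"
  shows "\<exists>q. (\<forall>i. coeff q i \<in> \<int>) \<and> poly q a = 0 \<and> poly q 1 \<noteq> 0"
proof -
  have "\<forall>q. degree q = n \<longrightarrow> (\<forall>i. coeff q i \<in> \<int>) \<longrightarrow> q \<noteq> 0 \<longrightarrow> poly q a = 0 \<longrightarrow>
         (\<exists>q. (\<forall>i. coeff q i \<in> \<int>) \<and> poly q a = 0 \<and> poly q 1 \<noteq> 0)" for n
  proof (induction n rule: less_induct)
    case (less n)
    show ?case
    proof (intro allI impI)
      fix q :: "real poly"
      assume d: "degree q = n" and ci: "\<forall>i. coeff q i \<in> \<int>" and nz: "q \<noteq> 0" and r: "poly q a = 0"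
      show "\<exists>q. (\<forall>i. coeff q i \<in> \<int>) \<and> poly q a = 0 \<and> poly q 1 \<noteq> 0"
      proof (cases "poly q 1 = 0")
        case False then show ?thesis using ci r by blast
      next
        case True
        define s where "s = synthetic_div q 1"
        have qs: "q = [:-1, 1:] * s" using synthetic_div_correct'[of 1 q] True by (simp add: s_def)
        have snz: "s \<noteq> 0" using qs nz by auto
        have "[:-1, 1::real:] \<noteq> 0" by simp
        then have "degree q = degree [:-1, 1::real:] + degree s" using qs snz degree_mult_eq by metis
        then have "degree s < n" using d by simp
        moreover have "\<forall>i. coeff s i \<in> \<int>" using ci synth_int s_def by blast
        moreover have "poly s a = 0" using qs r assms(2) by simp
        ultimately show ?thesis using less.IH snz by blast
      qed
    qed
  qed
  moreover obtain q where "\<And>i. coeff q i \<in> \<int>" "q \<noteq> 0" "poly q a = 0"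
    using assms(1) unfolding algebraic_def by blast
  ultimately show ?thesis by blast
qed



lemma pw_mem: "a powi i \<in> laurent_monoid a"
proof -
  have "a powi i = lval a {#i#}" by simp
  then show ?thesis unfolding laurent_eq by blast
qed

lemma atoms_sub:
  assumes a: "a > 0"
  shows "atoms (laurent_monoid a) \<subseteq> range (\<lambda>i. a powi i)"
proof
  fix x assume x: "x \<in> atoms (laurent_monoid a)"
  then obtain E where E: "x = lval a E" unfolding atoms_def laurent_eq by auto
  with x have "E \<noteq> {#}" unfolding atoms_def by auto
  then obtain i E' where E': "E = add_mset i E'" by (metis multiset_cases)
  show "x \<in> range (\<lambda>i. a powi i)"
  proof (cases "E' = {#}")
    case True then show ?thesis using E E' by simp
  next
    case False
    have "a powi i \<in> laurent_monoid a" "lval a E' \<in> laurent_monoid a"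
      using pw_mem unfolding laurent_eq by auto
    moreover have "a powi i \<noteq> 0" "lval a E' \<noteq> 0" using a False lval_zero_iff by auto
    moreover have "x = a powi i + lval a E'" using E E' by simp
    ultimately show ?thesis using x unfolding atoms_def by blast
  qed
qed


lemma atom_shift:
  assumes a: "a > 0" and j: "a powi j \<in> atoms (laurent_monoid a)"
  shows "a powi i \<in> atoms (laurent_monoid a)"
proof -
  have "\<not> (\<exists>b c. b \<in> laurent_monoid a \<and> c \<in> laurent_monoid a \<and> b \<noteq> 0 \<and> c \<noteq> 0 \<and> a powi i = b + c)"
  proof
    assume "\<exists>b c. b \<in> laurent_monoid a \<and> c \<in> laurent_monoid a \<and> b \<noteq> 0 \<and> c \<noteq> 0 \<and> a powi i = b + c"
    then obtain B C where BC: "lval a B \<noteq> 0" "lval a C \<noteq> 0" "a powi i = lval a B + lval a C"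
      unfolding laurent_eq by auto
    define d where "d = j - i"
    have "a powi j = a powi d * a powi i" using a by (simp add: d_def flip: power_int_add)
    also have "\<dots> = lval a (image_mset (\<lambda>x. x + d) B) + lval a (image_mset (\<lambda>x. x + d) C)"
      using BC(3) a by (simp add: distrib_left lval_shift)
    finally have "a powi j = lval a (image_mset (\<lambda>x. x + d) B) + lval a (image_mset (\<lambda>x. x + d) C)" .
    moreover have "lval a (image_mset (\<lambda>x. x + d) B) \<noteq> 0" "lval a (image_mset (\<lambda>x. x + d) C) \<noteq> 0"
      using BC a by (simp_all flip: lval_shift)
    ultimately show False using j unfolding atoms_def laurent_eq by blast
  qed
  then show ?thesis unfolding atoms_def using pw_mem[of a i] a by simp
qed

lemma atomic_all:
  assumes a: "a > 0" and all: "\<And>i. a powi i \<in> atoms (laurent_monoid a)"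
  shows "image_mset (\<lambda>i. a powi i) E \<in> factorizations (laurent_monoid a) (lval a E)"
  using all unfolding factorizations_def by (auto simp: lval_def)

lemma UFM_all:
  assumes a: "a > 0" and all: "\<And>i. a powi i \<in> atoms (laurent_monoid a)"
    and inj: "\<And>E1 E2. lval a E1 = lval a E2 \<Longrightarrow> image_mset (\<lambda>i. a powi i) E1 = image_mset (\<lambda>i. a powi i) E2"
  shows "UFM (laurent_monoid a)"
  unfolding UFM_def atomic_monoid_def
proof safe
  fix x assume "x \<in> laurent_monoid a"
  then obtain E where E: "x = lval a E" unfolding laurent_eq by auto
  have F0: "image_mset (\<lambda>i. a powi i) E \<in> factorizations (laurent_monoid a) x"
    using atomic_all[OF a all] E by simp
  { assume "factorizations (laurent_monoid a) x = {}" then show False using F0 by simp }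
  have "factorizations (laurent_monoid a) x = {image_mset (\<lambda>i. a powi i) E}"
  proof (intro equalityI subsetI)
    fix F assume F: "F \<in> factorizations (laurent_monoid a) x"
    then have "set_mset F \<subseteq> range (\<lambda>i. a powi i)"
      using atoms_sub[OF a] unfolding factorizations_def by blast
    then obtain E' where E': "F = image_mset (\<lambda>i. a powi i) E'" using fact_rep by blast
    then have "lval a E' = x" using F unfolding factorizations_def lval_def by simp
    then show "F \<in> {image_mset (\<lambda>i. a powi i) E}" using inj[of E' E] E E' by simp
  qed (use F0 in simp)
  then show "card (factorizations (laurent_monoid a) x) = 1" by simp
qed

lemma UFM_HFM: "UFM M \<Longrightarrow> HFM M"
  unfolding UFM_def HFM_def lengths_def
  by (metis card_1_singletonE image_empty image_insert is_singletonI is_singleton_altdef)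



lemma good_UFM:
  assumes a: "a > 0" and c: "a = 1 \<or> \<not> algebraic a"
  shows "UFM (laurent_monoid a)"
proof -
  have all: "a powi i \<in> atoms (laurent_monoid a)" for i
  proof -
    have "\<not> (\<exists>b c. b \<in> laurent_monoid a \<and> c \<in> laurent_monoid a \<and> b \<noteq> 0 \<and> c \<noteq> 0 \<and> a powi i = b + c)"
    proof
      assume "\<exists>b c. b \<in> laurent_monoid a \<and> c \<in> laurent_monoid a \<and> b \<noteq> 0 \<and> c \<noteq> 0 \<and> a powi i = b + c"
      then obtain B C where BC: "lval a B \<noteq> 0" "lval a C \<noteq> 0" "a powi i = lval a B + lval a C"
        unfolding laurent_eq by auto
      have B: "B \<noteq> {#}" and C: "C \<noteq> {#}" using BC by auto
      show False using c
      proof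
        assume "a = 1"
        then have "1 = real (size B) + real (size C)" using BC(3) by (simp add: lval_one)
        moreover have "size B \<ge> 1" "size C \<ge> 1" using B C by (auto simp: Suc_le_eq nonempty_has_size)
        ultimately show False by linarith
      next
        assume "\<not> algebraic a"
        moreover have "lval a {#i#} = lval a (B + C)" using BC(3) by simp
        ultimately have "{#i#} = B + C" using transc_inj[OF a] by blast
        then have "size (B + C) = 1" by (metis size_single)
        then show False using B C by (simp add: nonempty_has_size)
      qed
    qed
    then show ?thesis unfolding atoms_def using pw_mem[of a i] a by simp
  qed
  show ?thesis
  proof (rule UFM_all[OF a all])
    fix E1 E2 assume eq: "lval a E1 = lval a E2"
    show "image_mset (\<lambda>i. a powi i) E1 = image_mset (\<lambda>i. a powi i) E2"
      using c
    proof
      assume "a = 1"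
      then show ?thesis using eq by (simp add: lval_one image_mset_const_eq)
    next
      assume "\<not> algebraic a"
      then show ?thesis using transc_inj[OF a _ eq] by simp
    qed
  qed
qed

lemma HFM_good:
  assumes a: "a > 0" and H: "HFM (laurent_monoid a)"
  shows "a = 1 \<or> \<not> algebraic a"
proof (rule ccontr)
  assume "\<not> (a = 1 \<or> \<not> algebraic a)"
  then have alg: "algebraic a" and ne: "a \<noteq> 1" by auto
  let ?M = "laurent_monoid a"
  have "1 \<in> ?M" using pw_mem[of a 0] by simp
  then have "factorizations ?M 1 \<noteq> {}"
    using H unfolding HFM_def atomic_monoid_def by simp
  then obtain F where F: "F \<in> factorizations ?M 1" by blast
  then have "F \<noteq> {#}" unfolding factorizations_def by auto
  then obtain x where "x \<in># F" by blast
  then have "x \<in> atoms ?M" using F unfolding factorizations_def by auto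
  then obtain j where "a powi j \<in> atoms ?M" using atoms_sub[OF a] by auto
  then have all: "a powi i \<in> atoms ?M" for i using atom_shift[OF a] by blast
  obtain q where qi: "\<forall>i. coeff q i \<in> \<int>" and qa: "poly q a = 0" and q1: "poly q 1 \<noteq> 0"
    using good_poly[OF alg ne] by blast
  define D where "D = {..degree q}"
  define cP where "cP i = nat \<lfloor>coeff q i\<rfloor>" for i
  define cN where "cN i = nat (- \<lfloor>coeff q i\<rfloor>)" for i
  define EP where "EP = (\<Sum>i\<in>D. replicate_mset (cP i) (int i))"
  define EN where "EN = (\<Sum>i\<in>D. replicate_mset (cN i) (int i))"
  have D: "finite D" by (simp add: D_def)
  have cPN: "real (cP i) - real (cN i) = coeff q i" for i
  proof -
    have "coeff q i = of_int \<lfloor>coeff q i\<rfloor>" using qi[rule_format, of i] by (elim Ints_cases) simp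
    then show ?thesis unfolding cP_def cN_def by linarith
  qed
  have vP: "lval a EP = (\<Sum>i\<in>D. real (cP i) * a ^ i)" and sP: "size EP = (\<Sum>i\<in>D. cP i)"
    using sumrep[OF D, of a cP int] by (simp_all add: EP_def)
  have vN: "lval a EN = (\<Sum>i\<in>D. real (cN i) * a ^ i)" and sN: "size EN = (\<Sum>i\<in>D. cN i)"
    using sumrep[OF D, of a cN int] by (simp_all add: EN_def)
  have "lval a EP - lval a EN = (\<Sum>i\<in>D. coeff q i * a ^ i)"
    unfolding vP vN sum_subtractf[symmetric] by (simp add: left_diff_distrib[symmetric] cPN)
  then have veq: "lval a EP = lval a EN" using qa by (simp add: poly_altdef D_def)
  have "real (size EP) - real (size EN) = (\<Sum>i\<in>D. coeff q i)"
    unfolding sP sN of_nat_sum sum_subtractf[symmetric] by (simp add: cPN)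
  then have sne: "size EP \<noteq> size EN" using q1 by (auto simp: poly_altdef D_def)
  then have "EP \<noteq> {#} \<or> EN \<noteq> {#}" by auto
  then have xnz: "lval a EP \<noteq> 0" using veq lval_zero_iff[OF a] by metis
  have "lval a EP \<in> ?M" unfolding laurent_eq by blast
  then have c1: "card (lengths ?M (lval a EP)) = 1" using H xnz unfolding HFM_def by blast
  have "size EP \<in> lengths ?M (lval a EP)"
    unfolding lengths_def using atomic_all[OF a all, of EP] by (metis image_eqI size_image_mset)
  moreover have "size EN \<in> lengths ?M (lval a EP)"
    unfolding lengths_def veq using atomic_all[OF a all, of EN] by (metis image_eqI size_image_mset)
  ultimately show False using c1 sne by (metis card_1_singletonE singletonD)
qed

theorem proposition5p1:
  fixes \<alpha> :: real
  assumes "\<alpha> > 0"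
  shows "(UFM (laurent_monoid \<alpha>) \<longleftrightarrow> HFM (laurent_monoid \<alpha>))
       \<and> (HFM (laurent_monoid \<alpha>) \<longleftrightarrow> (\<alpha> = 1 \<or> \<not> algebraic \<alpha>))"
  using UFM_HFM HFM_good[OF assms] good_UFM[OF assms] by blast

end
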